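(* Let $n\ge1$ be an integer, $b_a>0$, $b_v>0$, $c>0$, and consider the system on $[0,1]^2$ $$\dot p=p(1-p)\Big(\frac{b_a}{n+1}-q(b_v-c)\Big),\qquad \dot q=q(1-q)\Big(\frac{b_v}{n+1}\sum_{k=0}^n p^k-c\Big),$$ with initial condition $p(0),q(0)\in(0,1)$. (i) If $b_a>(b_v-c)(n+1)$, then $p(t)\to 1$ (the population converges to all glycolytic). (ii) If $b_a<(b_v-c)(n+1)$ and $b_v>c(n+1)$, then $q(t)\to1$ and $p(t)\to0$ (the population converges to all VEGF (over)producers).
   Context: This system is the replicator dynamics of the double goods game in factored form: $p$ is the proportion of glycolytic cells and $q$ the proportion of VEGF (over)producers among the aerobic cells; $b_a$ is the benefit per unit of acidification, $b_v$ the benefit per unit of vascularization, $c$ the cost of (over)producing VEGF, and $n$ the number of interaction partners. *)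

theory Defs
  imports Complex_Main
begin

definition double_goods_solution ::
  "nat \<Rightarrow> real \<Rightarrow> real \<Rightarrow> real \<Rightarrow> (real \<Rightarrow> real) \<Rightarrow> (real \<Rightarrow> real) \<Rightarrow> bool" where
  "double_goods_solution n ba bv c p q \<longleftrightarrow>
     (\<forall>t\<ge>0.
        (p has_real_derivative
            (p t * (1 - p t) * (ba / (real n + 1) - q t * (bv - c)))) (at t within {0..}) \<and>
        (q has_real_derivative
            (q t * (1 - q t) * (bv / (real n + 1) * (\<Sum>k=0..n. p t ^ k) - c))) (at t within {0..}))"

end

theory Submission imports Defs "HOL-Analysis.Analysis" "HOL-Real_Asymp.Real_Asymp" begin

lemma dec_lemma:
  fixes f f' :: "real \<Rightarrow> real"
  assumes d: "\<And>t. t \<ge> 0 \<Longrightarrow> (f has_real_derivative f' t) (at t within {0..})"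
  and nonpos: "\<And>t. a < t \<Longrightarrow> f' t \<le> 0" and "0 \<le> a" "a \<le> s" "s \<le> t"
  shows "f t \<le> f s"
proof (rule DERIV_nonpos_imp_decreasing_open[of s t f])
  show "s \<le> t" by fact
  fix x assume x: "s < x" "x < t"
  have "at x within {0..} = at x"
    by (rule at_within_open[of x "{0<..}", THEN subst[where P="\<lambda>F. at x within {0..} = F"]]) 
       (use x assms in \<open>auto intro!: at_within_nhd[of _ "{0<..}"]\<close>)
  then show "\<exists>y. DERIV f x :> y \<and> y \<le> 0"
    using d[of x] nonpos[of x] x assms by auto
next
  have "continuous_on {0..} f"
    using d by (auto simp: continuous_on_eq_continuous_within intro: DERIV_continuous)
  then show "continuous_on {s..t} f"
    by (rule continuous_on_subset) (use assms in auto)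
qed

lemma pos_lin:
  fixes y a :: "real \<Rightarrow> real"
  assumes d: "\<And>t. t \<ge> 0 \<Longrightarrow> (y has_real_derivative (a t * y t)) (at t within {0..})"
  and ca: "continuous_on {0..} a" and y0: "y 0 > 0" and t: "t \<ge> 0"
  shows "y t > 0"
proof -
  define A where "A s = integral {0..s} a" for s
  have ca': "continuous_on {0..t} a" by (rule continuous_on_subset[OF ca]) auto
  have dA: "(A has_real_derivative a s) (at s within {0..t})" if "s \<in> {0..t}" for s
    unfolding A_def[abs_def] by (rule integral_has_real_derivative[OF ca' that])
  have dy: "(y has_real_derivative (a s * y s)) (at s within {0..t})" if "s \<in> {0..t}" for s
    by (rule DERIV_subset[OF d]) (use that in auto)
  have "((\<lambda>s. y s * exp (- A s)) has_real_derivative 0) (at s within {0..t})" if "s \<in> {0..t}" for s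
    by (rule derivative_eq_intros dy[OF that] dA[OF that] refl | simp)+
  then obtain k where k: "\<forall>s\<in>{0..t}. y s * exp (- A s) = k"
    using has_field_derivative_zero_constant[of "{0..t}" "\<lambda>s. y s * exp (- A s)"] by auto
  have "A 0 = 0" by (simp add: A_def)
  with k t have "y t * exp (- A t) = y 0" by (metis atLeastAtMost_iff order_refl exp_zero mult_1_right neg_0_equal_iff_equal)
  then have "y t = y 0 * exp (A t)" by (simp add: exp_minus field_simps)
  with y0 show ?thesis by simp
qed

lemma in01:
  fixes y k :: "real \<Rightarrow> real"
  assumes d: "\<And>t. t \<ge> 0 \<Longrightarrow> (y has_real_derivative (y t * (1 - y t) * k t)) (at t within {0..})"
  and ck: "continuous_on {0..} k" and y0: "0 < y 0" "y 0 < 1" and t: "t \<ge> 0"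
  shows "0 < y t \<and> y t < 1"
proof -
  have cy: "continuous_on {0..} y"
    using d by (auto simp: continuous_on_eq_continuous_within intro: DERIV_continuous)
  have d1: "(y has_real_derivative ((1 - y s) * k s) * y s) (at s within {0..})" if "s \<ge> 0" for s
    using d[OF that] by (simp add: algebra_simps)
  have "y t > 0"
    by (rule pos_lin[where a="\<lambda>t. (1 - y t) * k t", OF d1]) (use ck cy y0 t in \<open>auto intro!: continuous_intros\<close>)
  moreover
  have d2: "((\<lambda>t. 1 - y t) has_real_derivative (- (y s * k s)) * (1 - y s)) (at s within {0..})" if "s \<ge> 0" for s
    using DERIV_diff[OF DERIV_const d[OF that]] by (simp add: algebra_simps)
  have "1 - y t > 0"
    by (rule pos_lin[where a="\<lambda>t. - (y t * k t)", OF d2]) (use ck cy y0 t in \<open>auto intro!: continuous_intros\<close>)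
  ultimately show ?thesis by simp
qed

lemma to1:
  fixes y k :: "real \<Rightarrow> real"
  assumes d: "\<And>t. t \<ge> 0 \<Longrightarrow> (y has_real_derivative (y t * (1 - y t) * k t)) (at t within {0..})"
  and ck: "continuous_on {0..} k" and y0: "0 < y 0" "y 0 < 1"
  and dl: "\<delta> > 0" and kd: "\<And>t. t \<ge> 0 \<Longrightarrow> k t \<ge> \<delta>"
  shows "(y \<longlongrightarrow> 1) at_top"
proof -
  have b: "0 < y t" "y t < 1" if "t \<ge> 0" for t using in01[OF d ck y0 that] by auto
  have inc: "y 0 \<le> y t" if "t \<ge> 0" for t
  proof -
    have "- y t \<le> - y 0"
    proof (rule dec_lemma[where f="\<lambda>t. - y t" and f'="\<lambda>t. - (y t * (1 - y t) * k t)" and a=0])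
      fix t :: real assume "t \<ge> 0" from DERIV_minus[OF d[OF this]]
      show "((\<lambda>t. - y t) has_real_derivative - (y t * (1 - y t) * k t)) (at t within {0..})" .
    next
      fix t :: real assume "0 < t"
      with b[of t] kd[of t] dl have "0 \<le> y t * (1 - y t) * k t" by simp
      then show "- (y t * (1 - y t) * k t) \<le> 0" by simp
    qed (use that in auto)
    then show ?thesis by simp
  qed
  define e where "e = \<delta> * y 0"
  have e: "e > 0" using dl y0 by (simp add: e_def)
  have w: "(1 - y t) * exp (e * t) \<le> (1 - y 0) * exp (e * 0)" if "t \<ge> 0" for t
  proof (rule dec_lemma[where f="\<lambda>t. (1 - y t) * exp (e * t)" and a=0
       and f'="\<lambda>t. (1 - y t) * exp (e * t) * (e - y t * k t)"])
    fix t :: real assume t: "t \<ge> 0"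
    show "((\<lambda>t. (1 - y t) * exp (e * t)) has_real_derivative (1 - y t) * exp (e * t) * (e - y t * k t)) (at t within {0..})"
      by (rule derivative_eq_intros d[OF t] refl | simp add: algebra_simps)+
  next
    fix t :: real assume t: "0 < t"
    have "e \<le> y t * k t" unfolding e_def
      using mult_mono[OF kd[of t] inc[of t]] t dl y0 kd[of t] by (simp add: mult.commute)
    moreover have "0 \<le> (1 - y t) * exp (e * t)" using b[of t] t by simp
    ultimately show "(1 - y t) * exp (e * t) * (e - y t * k t) \<le> 0"
      by (simp add: mult_nonneg_nonpos)
  qed (use that in auto)
  have ub: "1 - y t \<le> (1 - y 0) * exp (- (e * t))" if "t \<ge> 0" for t
    using w[OF that] by (simp add: exp_minus field_simps)
  have lim: "((\<lambda>t. (1 - y 0) * exp (- (e * t))) \<longlongrightarrow> 0) at_top"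
    using e by real_asymp
  have "((\<lambda>t. 1 - y t) \<longlongrightarrow> 0) at_top"
  proof (rule tendsto_sandwich[OF _ _ tendsto_const lim])
    show "\<forall>\<^sub>F t in at_top. 0 \<le> 1 - y t" by (rule eventually_mono[OF eventually_ge_at_top[of 0]]) (smt (verit) b)
    show "\<forall>\<^sub>F t in at_top. 1 - y t \<le> (1 - y 0) * exp (- (e * t))"
      by (rule eventually_mono[OF eventually_ge_at_top[of 0]]) (rule ub)
  qed
  from tendsto_diff[OF tendsto_const this, of 1] show ?thesis by simp
qed

lemma to0:
  fixes y k :: "real \<Rightarrow> real"
  assumes d: "\<And>t. t \<ge> 0 \<Longrightarrow> (y has_real_derivative (y t * (1 - y t) * k t)) (at t within {0..})"
  and ck: "continuous_on {0..} k" and y0: "0 < y 0" "y 0 < 1"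
  and T: "T \<ge> 0" and eta: "\<eta> > 0" and kd: "\<And>t. t \<ge> T \<Longrightarrow> k t \<le> - \<eta>"
  shows "(y \<longlongrightarrow> 0) at_top"
proof -
  have b: "0 < y t" "y t < 1" if "t \<ge> 0" for t using in01[OF d ck y0 that] by auto
  have dec: "y t \<le> y T" if "t \<ge> T" for t
  proof (rule dec_lemma[where f=y and f'="\<lambda>t. y t * (1 - y t) * k t" and a=T and s=T and t=t])
    fix t :: real assume "T < t"
    with b[of t] kd[of t] eta T have "0 \<le> y t * (1 - y t)" "k t \<le> 0" by auto
    then show "y t * (1 - y t) * k t \<le> 0" by (simp add: mult_nonneg_nonpos)
  qed (use that T d in auto)
  define e where "e = \<eta> * (1 - y T)"
  have e: "e > 0" using eta b[OF T] by (simp add: e_def)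
  have w: "y t * exp (e * t) \<le> y T * exp (e * T)" if "t \<ge> T" for t
  proof (rule dec_lemma[where f="\<lambda>t. y t * exp (e * t)" and a=T
       and f'="\<lambda>t. y t * exp (e * t) * (e + (1 - y t) * k t)"])
    fix t :: real assume t: "t \<ge> 0"
    show "((\<lambda>t. y t * exp (e * t)) has_real_derivative y t * exp (e * t) * (e + (1 - y t) * k t)) (at t within {0..})"
      by (rule derivative_eq_intros d[OF t] refl | simp add: algebra_simps)+
  next
    fix t :: real assume t: "T < t"
    have "(1 - y t) * k t \<le> (1 - y t) * (- \<eta>)"
      using kd[of t] b[of t] t T by (intro mult_left_mono) auto
    moreover have "\<eta> * (1 - y T) \<le> \<eta> * (1 - y t)"
      using dec[of t] t eta by (intro mult_left_mono) auto
    ultimately have "e + (1 - y t) * k t \<le> 0" by (simp add: e_def algebra_simps)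
    moreover have "0 \<le> y t * exp (e * t)" using b[of t] t T by simp
    ultimately show "y t * exp (e * t) * (e + (1 - y t) * k t) \<le> 0"
      by (simp add: mult_nonneg_nonpos)
  qed (use that T in auto)
  have ub: "y t \<le> y T * exp (e * T) * exp (- (e * t))" if "t \<ge> T" for t
    using w[OF that] by (simp add: exp_minus field_simps)
  have lim: "((\<lambda>t. y T * exp (e * T) * exp (- (e * t))) \<longlongrightarrow> 0) at_top"
    using e by real_asymp
  show ?thesis
  proof (rule tendsto_sandwich[OF _ _ tendsto_const lim])
    show "\<forall>\<^sub>F t in at_top. 0 \<le> y t" by (rule eventually_mono[OF eventually_ge_at_top[of 0]]) (smt (verit) b)
    show "\<forall>\<^sub>F t in at_top. y t \<le> y T * exp (e * T) * exp (- (e * t))"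
      by (rule eventually_mono[OF eventually_ge_at_top[of T]]) (rule ub)
  qed
qed

theorem mainTheorem4:
  fixes n :: nat and ba bv c :: real and p q :: "real \<Rightarrow> real"
  assumes "n \<ge> 1" and "ba > 0" and "bv > 0" and "c > 0"
    and "double_goods_solution n ba bv c p q"
    and "0 < p 0" and "p 0 < 1" and "0 < q 0" and "q 0 < 1"
  shows "(ba > (bv - c) * (real n + 1) \<longrightarrow> (p \<longlongrightarrow> 1) at_top)
       \<and> (ba < (bv - c) * (real n + 1) \<and> bv > c * (real n + 1)
            \<longrightarrow> (q \<longlongrightarrow> 1) at_top \<and> (p \<longlongrightarrow> 0) at_top)"
proof -
  note sol = assms(5)[unfolded double_goods_solution_def]
  define g where "g t = ba / (real n + 1) - q t * (bv - c)" for t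
  define h where "h t = bv / (real n + 1) * (\<Sum>k=0..n. p t ^ k) - c" for t
  have dp: "(p has_real_derivative (p t * (1 - p t) * g t)) (at t within {0..})" if "t \<ge> 0" for t
    using sol that by (simp add: g_def)
  have dq: "(q has_real_derivative (q t * (1 - q t) * h t)) (at t within {0..})" if "t \<ge> 0" for t
    using sol that by (simp add: h_def)
  have cp: "continuous_on {0..} p"
    using dp by (auto simp: continuous_on_eq_continuous_within intro: DERIV_continuous)
  have cq: "continuous_on {0..} q"
    using dq by (auto simp: continuous_on_eq_continuous_within intro: DERIV_continuous)
  have cg: "continuous_on {0..} g" unfolding g_def[abs_def] using cq by (intro continuous_intros)
  have ch: "continuous_on {0..} h" unfolding h_def[abs_def] using cp by (intro continuous_intros)
  have pb: "0 < p t" "p t < 1" if "t \<ge> 0" for t using in01[OF dp cg assms(6,7) that] by auto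
  have qb: "0 < q t" "q t < 1" if "t \<ge> 0" for t using in01[OF dq ch assms(8,9) that] by auto
  have n1: "real n + 1 > 0" by simp
  have part1: "(p \<longlongrightarrow> 1) at_top" if H: "ba > (bv - c) * (real n + 1)"
  proof -
    define \<delta> where "\<delta> = min (ba / (real n + 1)) (ba / (real n + 1) - (bv - c))"
    have "ba / (real n + 1) > bv - c" using H n1 by (simp add: field_simps)
    then have dl: "\<delta> > 0" using assms(2) n1 by (simp add: \<delta>_def)
    have "g t \<ge> \<delta>" if t: "t \<ge> 0" for t
    proof (cases "bv - c \<le> 0")
      case True
      then have "q t * (bv - c) \<le> 0" using qb[OF t] by (simp add: mult_nonneg_nonpos)
      then show ?thesis by (simp add: g_def \<delta>_def)
    next
      case False
      then have "q t * (bv - c) \<le> 1 * (bv - c)" using qb[OF t] by (intro mult_right_mono) auto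
      then show ?thesis by (simp add: g_def \<delta>_def)
    qed
    then show ?thesis using to1[OF dp cg assms(6,7) dl] by blast
  qed
  have part2: "(q \<longlongrightarrow> 1) at_top \<and> (p \<longlongrightarrow> 0) at_top"
    if H1: "ba < (bv - c) * (real n + 1)" and H2: "bv > c * (real n + 1)"
  proof -
    define \<epsilon> where "\<epsilon> = bv / (real n + 1) - c"
    have ep: "\<epsilon> > 0" using H2 n1 by (simp add: \<epsilon>_def field_simps)
    have "h t \<ge> \<epsilon>" if t: "t \<ge> 0" for t
    proof -
      have "1 \<le> (\<Sum>k=0..n. p t ^ k)"
        using member_le_sum[of 0 "{0..n}" "\<lambda>k. p t ^ k"] pb[OF t] by auto
      then have "bv / (real n + 1) * 1 \<le> bv / (real n + 1) * (\<Sum>k=0..n. p t ^ k)"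
        using assms(3) n1 by (intro mult_left_mono) auto
      then show ?thesis by (simp add: h_def \<epsilon>_def)
    qed
    then have qlim: "(q \<longlongrightarrow> 1) at_top" using to1[OF dq ch assms(8,9) ep] by blast
    define D where "D = bv - c"
    have "ba / (real n + 1) < D" using H1 n1 by (simp add: D_def field_simps)
    have "0 < D * (real n + 1)" using H1 assms(2) by (simp add: D_def)
    then have Dp: "D > 0" using n1 by (simp add: zero_less_mult_iff)
    define \<eta> where "\<eta> = (D - ba / (real n + 1)) / 2"
    have eta: "\<eta> > 0" using \<open>ba / (real n + 1) < D\<close> by (simp add: \<eta>_def)
    have "1 - \<eta> / D < 1" using eta Dp by simp
    from order_tendstoD(1)[OF qlim this] obtain T0 where T0: "\<And>t. t \<ge> T0 \<Longrightarrow> q t > 1 - \<eta> / D"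
      by (auto simp: eventually_at_top_linorder)
    have "g t \<le> - \<eta>" if t: "t \<ge> max T0 0" for t
    proof -
      have "(1 - \<eta> / D) * D \<le> q t * D" using T0[of t] t Dp by (intro mult_right_mono) auto
      moreover have "(1 - \<eta> / D) * D = D - \<eta>" using Dp by (simp add: field_simps)
      moreover have "g t = ba / (real n + 1) - q t * D" by (simp add: g_def D_def)
      moreover have "ba / (real n + 1) = D - 2 * \<eta>" unfolding \<eta>_def by (simp add: field_simps)
      ultimately show ?thesis by linarith
    qed
    then have "(p \<longlongrightarrow> 0) at_top" using to0[OF dp cg assms(6,7) _ eta, of "max T0 0"] by auto
    with qlim show ?thesis by simp
  qed
  from part1 part2 show ?thesis by blast
qed

end
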